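(* For every integer $F\ge12$, $s(F,4,3)=4F-30$.
   Context: A placement delivery array $S$-PDA$(F,K,Z)$ is an $F\times K$ array $R=(r_{j,k})$, $1\le j\le F$, $1\le k\le K$, over a finite set $S$ such that: (1) each cell is either empty or contains an element of $S$; (2) each column contains exactly $Z$ empty cells; (3) each element of $S$ occurs at most once in each row and at most once in each column; (4) if two distinct nonempty cells satisfy $r_{j_1,k_1}=r_{j_2,k_2}=t\in S$, then the cells $r_{j_1,k_2}$ and $r_{j_2,k_1}$ are empty. For integers $F,K\ge1$, $0\le Z\le F$, define $s(F,K,Z)=\min\{|S| : \text{there exists an } S\text{-PDA}(F,K,Z)\}$. *)

theory Defs
  imports Main
begin

text \<open>An F x K array over S: cells indexed by rows 1..F and columns 1..K;
  None = empty cell, Some t = cell containing t.\<close>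

definition is_PDA :: "'a set \<Rightarrow> nat \<Rightarrow> nat \<Rightarrow> nat \<Rightarrow> (nat \<Rightarrow> nat \<Rightarrow> 'a option) \<Rightarrow> bool" where
  "is_PDA S F K Z R \<longleftrightarrow>
     finite S \<and>
     (\<forall>j\<in>{1..F}. \<forall>k\<in>{1..K}. \<forall>t. R j k = Some t \<longrightarrow> t \<in> S) \<and>
     (\<forall>k\<in>{1..K}. card {j\<in>{1..F}. R j k = None} = Z) \<and>
     (\<forall>t\<in>S. \<forall>j\<in>{1..F}. \<forall>k1\<in>{1..K}. \<forall>k2\<in>{1..K}.
         R j k1 = Some t \<and> R j k2 = Some t \<longrightarrow> k1 = k2) \<and>
     (\<forall>t\<in>S. \<forall>k\<in>{1..K}. \<forall>j1\<in>{1..F}. \<forall>j2\<in>{1..F}.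
         R j1 k = Some t \<and> R j2 k = Some t \<longrightarrow> j1 = j2) \<and>
     (\<forall>j1\<in>{1..F}. \<forall>j2\<in>{1..F}. \<forall>k1\<in>{1..K}. \<forall>k2\<in>{1..K}. \<forall>t.
         (j1, k1) \<noteq> (j2, k2) \<and> R j1 k1 = Some t \<and> R j2 k2 = Some t \<longrightarrow>
           R j1 k2 = None \<and> R j2 k1 = None)"

text \<open>s(F,K,Z): minimum size of a symbol set admitting a PDA. Symbols are
  taken from nat w.l.o.g. (any finite symbol set can be relabelled).\<close>

definition s_PDA :: "nat \<Rightarrow> nat \<Rightarrow> nat \<Rightarrow> nat" where
  "s_PDA F K Z = (LEAST n. \<exists>(S::nat set) R. is_PDA S F K Z R \<and> card S = n)"

end

theory Submission
  imports Defs
begin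

definition T :: "nat \<Rightarrow> nat \<Rightarrow> nat option" where
 "T j k = (let a = (j-1) div 3; i = (j-1) mod 3; c = k-1 in
    if c = a then None else Some (3 * (min a c + max a c * (max a c - 1) div 2) + i))"
definition pr :: "nat \<Rightarrow> nat \<times> nat" where "pr p = [(0,1),(0,2),(1,2),(0,3),(1,3),(2,3)] ! p"
definition pos1 :: "nat \<Rightarrow> nat \<times> nat" where
  "pos1 t = (3 * fst (pr (t div 3)) + t mod 3 + 1, snd (pr (t div 3)) + 1)"
definition pos2 :: "nat \<Rightarrow> nat \<times> nat" where
  "pos2 t = (3 * snd (pr (t div 3)) + t mod 3 + 1, fst (pr (t div 3)) + 1)"
lemma r12: "j\<in>{1..12::nat} \<Longrightarrow> j=1\<or>j=2\<or>j=3\<or>j=4\<or>j=5\<or>j=6\<or>j=7\<or>j=8\<or>j=9\<or>j=10\<or>j=11\<or>j=12"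
  by (simp add: atLeastAtMost_iff, presburger)
lemma r4: "j\<in>{1..4::nat} \<Longrightarrow> j=1\<or>j=2\<or>j=3\<or>j=4" by auto
lemma r18: "t<(18::nat) \<Longrightarrow> t=0\<or>t=1\<or>t=2\<or>t=3\<or>t=4\<or>t=5\<or>t=6\<or>t=7\<or>t=8\<or>t=9\<or>t=10\<or>t=11\<or>t=12\<or>t=13\<or>t=14\<or>t=15\<or>t=16\<or>t=17"
  by presburger
lemma Tpos: "j\<in>{1..12} \<Longrightarrow> k\<in>{1..4} \<Longrightarrow> T j k = Some t \<Longrightarrow> t < 18 \<and> ((j,k) = pos1 t \<or> (j,k) = pos2 t)"
  apply (drule r12, drule r4)
  apply (elim disjE)
  apply (simp_all add: T_def pos1_def pos2_def pr_def)
  done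
lemma Tcross: "t < 18 \<Longrightarrow> T (fst (pos1 t)) (snd (pos2 t)) = None \<and> T (fst (pos2 t)) (snd (pos1 t)) = None"
  apply (drule r18)
  apply (elim disjE)
  apply (simp_all add: T_def pos1_def pos2_def pr_def)
  done
lemma Tnone: "k\<in>{1..4} \<Longrightarrow> {j\<in>{1..12}. T j k = None} = {3*k-2..3*k}"
  apply (drule r4)
  apply (elim disjE)
  apply (auto simp: T_def Let_def split: if_splits)
  done

lemma pos_small: "t < 18 \<Longrightarrow> fst (pos1 t) \<le> 12 \<and> fst (pos2 t) \<le> 12"
  apply (drule r18)
  apply (elim disjE)
  apply (simp_all add: pos1_def pos2_def pr_def)
  done

lemma arith2: "(2::nat) * g \<le> 2 + (g * g - g)"
proof (cases "g \<le> 2")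
  case True then have "g = 0 \<or> g = 1 \<or> g = 2" by auto
  then show ?thesis by auto
next
  case False
  then have "3 * g \<le> g * g" by (intro mult_right_mono) auto
  then show ?thesis by arith
qed



definition Rc :: "nat \<Rightarrow> nat \<Rightarrow> nat option" where
  "Rc j k = (if j \<le> 12 then T j k else Some (18 + 4*(j-13) + (k-1)))"

lemma Rc_key:
  assumes "j1 \<in> {1..F}" "j2 \<in> {1..F}" "k1 \<in> {1..4}" "k2 \<in> {1..4}"
    "(j1,k1) \<noteq> (j2,k2)" "Rc j1 k1 = Some t" "Rc j2 k2 = Some t"
  shows "Rc j1 k2 = None \<and> Rc j2 k1 = None"
proof (cases "j1 \<le> 12")
  case s1: True
  then have t1: "t < 18 \<and> ((j1,k1) = pos1 t \<or> (j1,k1) = pos2 t)"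
    using Tpos[of j1 k1 t] assms by (auto simp: Rc_def)
  show ?thesis
  proof (cases "j2 \<le> 12")
    case s2: True
    then have t2: "(j2,k2) = pos1 t \<or> (j2,k2) = pos2 t"
      using Tpos[of j2 k2 t] assms by (auto simp: Rc_def)
    have "((j1,k1) = pos1 t \<and> (j2,k2) = pos2 t) \<or> ((j1,k1) = pos2 t \<and> (j2,k2) = pos1 t)"
      using t1 t2 assms(5) by metis
    then show ?thesis
    proof
      assume "(j1,k1) = pos1 t \<and> (j2,k2) = pos2 t"
      then have "j1 = fst (pos1 t)" "k2 = snd (pos2 t)" "j2 = fst (pos2 t)" "k1 = snd (pos1 t)"
        by (metis fst_conv snd_conv)+
      then show ?thesis using Tcross[of t] t1 s1 s2 by (simp add: Rc_def)
    next
      assume "(j1,k1) = pos2 t \<and> (j2,k2) = pos1 t"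
      then have "j1 = fst (pos2 t)" "k2 = snd (pos1 t)" "j2 = fst (pos1 t)" "k1 = snd (pos2 t)"
        by (metis fst_conv snd_conv)+
      then show ?thesis using Tcross[of t] t1 s1 s2 by (simp add: Rc_def)
    qed
  next
    case False
    then show ?thesis using assms t1 by (auto simp: Rc_def)
  qed
next
  case False
  show ?thesis
  proof (cases "j2 \<le> 12")
    case s2: True
    then have "t < 18" using Tpos[of j2 k2 t] assms by (auto simp: Rc_def)
    then show ?thesis using assms False by (auto simp: Rc_def)
  next
    case s2: False
    have "18 + 4*(j1-13) + (k1-1) = 18 + 4*(j2-13) + (k2-1)"
      using assms False s2 by (auto simp: Rc_def)
    then have e: "4*(j1-13) + (k1-1) = 4*(j2-13) + (k2-1)" by simp
    have k1: "k1 - 1 < 4" "k2 - 1 < 4" using assms(3,4) by auto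
    have "(4*(j1-13) + (k1-1)) div 4 = j1 - 13" "(4*(j1-13) + (k1-1)) mod 4 = k1 - 1"
      "(4*(j2-13) + (k2-1)) div 4 = j2 - 13" "(4*(j2-13) + (k2-1)) mod 4 = k2 - 1"
      using k1 by simp_all
    then have "j1 - 13 = j2 - 13" "k1 - 1 = k2 - 1" using e by metis+
    then have "j1 = j2 \<and> k1 = k2" using assms(3,4) False s2 by auto
    then show ?thesis using assms by auto
  qed
qed

lemma Rc_PDA:
  assumes "F \<ge> 12"
  shows "is_PDA {0..<4*F-30} F 4 3 Rc"
  unfolding is_PDA_def
proof (intro conjI ballI allI impI)
  show "finite {0..<4*F-30}" by simp
next
  fix j k t assume j: "j \<in> {1..F}" and k: "k \<in> {1..4::nat}" and "Rc j k = Some t"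
  then show "t \<in> {0..<4*F-30}"
  proof (cases "j \<le> 12")
    case True
    then have "t < 18" using Tpos[of j k t] j k \<open>Rc j k = Some t\<close> by (auto simp: Rc_def)
    then show ?thesis using assms by auto
  next
    case False
    then show ?thesis using j k \<open>Rc j k = Some t\<close> by (auto simp: Rc_def)
  qed
next
  fix k assume k: "k \<in> {1..4::nat}"
  have "{j\<in>{1..F}. Rc j k = None} = {j\<in>{1..12}. T j k = None}"
    using assms by (auto simp: Rc_def split: if_splits)
  also have "\<dots> = {3*k-2..3*k}" using Tnone[OF k] .
  finally show "card {j\<in>{1..F}. Rc j k = None} = 3" using k by auto
next
  fix t j k1 k2
  assume "j \<in> {1..F}" "k1 \<in> {1..4::nat}" "k2 \<in> {1..4::nat}" "Rc j k1 = Some t \<and> Rc j k2 = Some t"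
  then show "k1 = k2" using Rc_key[of j F j k1 k2 t] by auto
next
  fix t k j1 j2
  assume "k \<in> {1..4::nat}" "j1 \<in> {1..F}" "j2 \<in> {1..F}" "Rc j1 k = Some t \<and> Rc j2 k = Some t"
  then show "j1 = j2" using Rc_key[of j1 F j2 k k t] by auto
next
  fix j1 j2 k1 k2 t
  assume "j1 \<in> {1..F}" "j2 \<in> {1..F}" "k1 \<in> {1..4::nat}" "k2 \<in> {1..4::nat}"
    "(j1, k1) \<noteq> (j2, k2) \<and> Rc j1 k1 = Some t \<and> Rc j2 k2 = Some t"
  then show "Rc j1 k2 = None" using Rc_key[of j1 F j2 k1 k2 t] by auto
next
  fix j1 j2 k1 k2 t
  assume "j1 \<in> {1..F}" "j2 \<in> {1..F}" "k1 \<in> {1..4::nat}" "k2 \<in> {1..4::nat}"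
    "(j1, k1) \<noteq> (j2, k2) \<and> Rc j1 k1 = Some t \<and> Rc j2 k2 = Some t"
  then show "Rc j2 k1 = None" using Rc_key[of j1 F j2 k1 k2 t] by auto
qed


lemma card_offdiag:
  assumes "finite A"
  shows "card {(x,y). x \<in> A \<and> y \<in> A \<and> x \<noteq> y} = card A * card A - card A"
proof -
  have eq: "A \<times> A = {(x,y). x \<in> A \<and> y \<in> A \<and> x \<noteq> y} \<union> (\<lambda>x. (x,x)) ` A" by auto
  have fin: "finite {(x,y). x \<in> A \<and> y \<in> A \<and> x \<noteq> y}"
    by (rule finite_subset[of _ "A \<times> A"]) (use assms in auto)
  have "card (A \<times> A) = card {(x,y). x \<in> A \<and> y \<in> A \<and> x \<noteq> y} + card ((\<lambda>x. (x,x)) ` A)"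
    unfolding eq by (rule card_Un_disjoint) (use fin assms in auto)
  moreover have "card ((\<lambda>x. (x,x)) ` A) = card A" by (rule card_image) (auto simp: inj_on_def)
  ultimately show ?thesis by (simp add: card_cartesian_product)
qed

lemma lower:
  assumes P: "is_PDA S F 4 3 R"
  shows "4*F - 30 \<le> card S"
proof -
  have finS: "finite S"
    and vals: "\<forall>j\<in>{1..F}. \<forall>k\<in>{1..4}. \<forall>t. R j k = Some t \<longrightarrow> t \<in> S"
    and cols: "\<forall>k\<in>{1..4}. card {j\<in>{1..F}. R j k = None} = 3"
    and colu: "\<forall>t\<in>S. \<forall>k\<in>{1..4}. \<forall>j1\<in>{1..F}. \<forall>j2\<in>{1..F}.
         R j1 k = Some t \<and> R j2 k = Some t \<longrightarrow> j1 = j2"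
    and cross: "\<forall>j1\<in>{1..F}. \<forall>j2\<in>{1..F}. \<forall>k1\<in>{1..4}. \<forall>k2\<in>{1..4}. \<forall>t.
         (j1, k1) \<noteq> (j2, k2) \<and> R j1 k1 = Some t \<and> R j2 k2 = Some t \<longrightarrow>
           R j1 k2 = None \<and> R j2 k1 = None"
    using P unfolding is_PDA_def by blast+
  define C where "C = (SIGMA k:{1..4::nat}. {j\<in>{1..F}. R j k \<noteq> None})"
  define E where "E = (SIGMA k:{1..4::nat}. {j\<in>{1..F}. R j k = None})"
  have finC: "finite C" unfolding C_def by auto
  have finE: "finite E" unfolding E_def by auto
  have cardE: "card E = 12"
  proof -
    have "card E = (\<Sum>k\<in>{1..4::nat}. card {j\<in>{1..F}. R j k = None})"
      unfolding E_def by (rule card_SigmaI) auto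
    also have "\<dots> = (\<Sum>k\<in>{1..4::nat}. 3)" using cols by (intro sum.cong) auto
    finally show ?thesis by simp
  qed
  have cardC: "card C = 4 * (F - 3)"
  proof -
    have "card C = (\<Sum>k\<in>{1..4::nat}. card {j\<in>{1..F}. R j k \<noteq> None})"
      unfolding C_def by (rule card_SigmaI) auto
    also have "\<dots> = (\<Sum>k\<in>{1..4::nat}. F - 3)"
    proof (intro sum.cong refl)
      fix k assume k: "k \<in> {1..4::nat}"
      have "{j\<in>{1..F}. R j k \<noteq> None} = {1..F} - {j\<in>{1..F}. R j k = None}" by auto
      moreover have "card ({1..F} - {j\<in>{1..F}. R j k = None}) = card {1..F} - card {j\<in>{1..F}. R j k = None}"
        by (rule card_Diff_subset) auto
      ultimately have "card {j\<in>{1..F}. R j k \<noteq> None} = card {1..F} - card {j\<in>{1..F}. R j k = None}"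
        by simp
      then show "card {j\<in>{1..F}. R j k \<noteq> None} = F - 3" using cols k by simp
    qed
    finally show ?thesis by simp
  qed
  define D where "D = (SIGMA e:E. {1..4::nat} - {fst e})"
  have cardD: "card D = 36"
  proof -
    have "card D = (\<Sum>e\<in>E. card ({1..4::nat} - {fst e}))"
      unfolding D_def by (rule card_SigmaI) (use finE in auto)
    also have "\<dots> = (\<Sum>e\<in>E. 3)"
    proof (intro sum.cong refl)
      fix e assume "e \<in> E"
      then have "fst e \<in> {1..4}" unfolding E_def by auto
      then show "card ({1..4::nat} - {fst e}) = 3" by (simp add: card_Diff_singleton)
    qed
    finally show ?thesis using cardE by simp
  qed
  define PP where "PP = {(c1,c2). c1 \<in> C \<and> c2 \<in> C \<and> c1 \<noteq> c2 \<and> R (snd c1) (fst c1) = R (snd c2) (fst c2)}"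
  define f where "f = (\<lambda>(c1::nat\<times>nat, c2::nat\<times>nat). ((fst c2, snd c1), fst c1))"
  have inj: "inj_on f PP"
  proof (rule inj_onI)
    fix x y assume x: "x \<in> PP" and y: "y \<in> PP" and fxy: "f x = f y"
    obtain k1 j1 k2 j2 where xe: "x = ((k1,j1),(k2,j2))" by (metis prod.collapse)
    obtain k1' j1' k2' j2' where ye: "y = ((k1',j1'),(k2',j2'))" by (metis prod.collapse)
    have eq: "k2 = k2'" "j1 = j1'" "k1 = k1'" using fxy xe ye by (auto simp: f_def)
    from x obtain t where t: "R j1 k1 = Some t" "R j2 k2 = Some t" and m: "j1 \<in> {1..F}" "k1 \<in> {1..4}"
      "j2 \<in> {1..F}" "k2 \<in> {1..4}"
      unfolding xe PP_def C_def by auto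
    from y have t': "R j2' k2 = Some t" "j2' \<in> {1..F}"
      unfolding ye PP_def C_def using eq t by auto
    have "t \<in> S" using vals t m by blast
    then have "j2 = j2'" using colu t t' m by blast
    then show "x = y" using xe ye eq by simp
  qed
  have img: "f ` PP \<subseteq> D"
  proof
    fix z assume "z \<in> f ` PP"
    then obtain x where x: "x \<in> PP" and z: "z = f x" by blast
    obtain k1 j1 k2 j2 where xe: "x = ((k1,j1),(k2,j2))" by (metis prod.collapse)
    from x obtain t where t: "R j1 k1 = Some t" "R j2 k2 = Some t" and m: "j1 \<in> {1..F}" "k1 \<in> {1..4}"
      "j2 \<in> {1..F}" "k2 \<in> {1..4}" and ne: "(j1,k1) \<noteq> (j2,k2)"
      unfolding xe PP_def C_def by auto
    have "R j1 k2 = None \<and> R j2 k1 = None" using cross m t ne by blast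
    then have "k1 \<noteq> k2" "R j1 k2 = None" using t by auto
    then show "z \<in> D" unfolding z xe f_def D_def E_def using m by auto
  qed
  have cardP: "card PP \<le> 36"
    using card_inj_on_le[OF inj img] finE cardD unfolding D_def by auto
  define Oc where "Oc t = {c\<in>C. R (snd c) (fst c) = Some t}" for t
  define Q where "Q t = {(x,y). x \<in> Oc t \<and> y \<in> Oc t \<and> x \<noteq> y}" for t
  have finO: "finite (Oc t)" for t unfolding Oc_def using finC by auto
  have C_U: "C = (\<Union>t\<in>S. Oc t)"
  proof
    show "C \<subseteq> (\<Union>t\<in>S. Oc t)"
    proof
      fix c assume c: "c \<in> C"
      then obtain t where t: "R (snd c) (fst c) = Some t" unfolding C_def by auto
      have "t \<in> S" using c t vals unfolding C_def by auto
      then show "c \<in> (\<Union>t\<in>S. Oc t)" using c t unfolding Oc_def by auto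
    qed
  qed (auto simp: Oc_def)
  have P_U: "PP = (\<Union>t\<in>S. Q t)"
  proof
    show "PP \<subseteq> (\<Union>t\<in>S. Q t)"
    proof
      fix x assume x: "x \<in> PP"
      obtain c1 c2 where xe: "x = (c1,c2)" by (metis prod.collapse)
      have c1: "c1 \<in> C" using x xe unfolding PP_def by auto
      then obtain t where t: "R (snd c1) (fst c1) = Some t" unfolding C_def by auto
      have "t \<in> S" using c1 t vals unfolding C_def by auto
      then show "x \<in> (\<Union>t\<in>S. Q t)" using x xe t unfolding Q_def Oc_def PP_def by force
    qed
  qed (auto simp: Q_def Oc_def PP_def)
  have cC: "card C = (\<Sum>t\<in>S. card (Oc t))"
    unfolding C_U by (rule card_UN_disjoint) (use finS finO in \<open>auto simp: Oc_def\<close>)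
  have cP: "card PP = (\<Sum>t\<in>S. card (Oc t) * card (Oc t) - card (Oc t))"
  proof -
    have "card PP = (\<Sum>t\<in>S. card (Q t))"
      unfolding P_U
    proof (rule card_UN_disjoint)
      show "finite S" by (rule finS)
      show "\<forall>t\<in>S. finite (Q t)"
      proof
        fix t show "finite (Q t)" unfolding Q_def
          by (rule finite_subset[of _ "Oc t \<times> Oc t"]) (use finO in auto)
      qed
    qed (auto simp: Q_def Oc_def)
    also have "\<dots> = (\<Sum>t\<in>S. card (Oc t) * card (Oc t) - card (Oc t))"
      unfolding Q_def using card_offdiag[OF finO] by simp
    finally show ?thesis .
  qed
  have "2 * card C = (\<Sum>t\<in>S. 2 * card (Oc t))" unfolding cC by (simp add: sum_distrib_left)
  also have "\<dots> \<le> (\<Sum>t\<in>S. 2 + (card (Oc t) * card (Oc t) - card (Oc t)))"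
    by (intro sum_mono arith2)
  also have "\<dots> = 2 * card S + card PP" unfolding cP by (simp only: sum.distrib) simp
  finally have "2 * card C \<le> 2 * card S + card PP" .
  then have "8 * (F - 3) \<le> 2 * card S + 36" using cardC cardP by simp
  then show ?thesis by simp
qed

theorem mainTheorem17:
  fixes F :: nat
  assumes "F \<ge> 12"
  shows "s_PDA F 4 3 = 4 * F - 30"
  unfolding s_PDA_def
proof (rule Least_equality)
  show "\<exists>(S::nat set) R. is_PDA S F 4 3 R \<and> card S = 4 * F - 30"
    using Rc_PDA[OF assms] by (intro exI[of _ "{0..<4*F-30}"] exI[of _ Rc]) simp
next
  fix y assume "\<exists>(S::nat set) R. is_PDA S F 4 3 R \<and> card S = y"
  then show "4 * F - 30 \<le> y" using lower by blast
qed

end
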